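(* Assume the setting in the context, with a decomposition of $\mathcal X$ over $A$, a cost function $g\in\mathcal G_s$, a fixed $\alpha\in(0,1)$, and assume moreover that $A$ is invertible. Then the following are equivalent: (a) $\mathcal R(B)=\bigoplus_{i\in\mathcal I}\big[\mathcal R(B)\cap\mathcal X_i\big]$; (b) $\{(A,B|_{\mathcal E_i},g,T)\}_{i\in\mathcal I}$ is a decomposition of $(A,B,g,T)$ for every integer $T>0$; (c) $\{(A,B|_{\mathcal E_i},g,\alpha)\}_{i\in\mathcal I}$ is a decomposition of $(A,B,g,\alpha)$.
   Context: Let $\mathcal F$ be a field and $\mathcal X,\mathcal U$ finite-dimensional vector spaces over $\mathcal F$. Let $A:\mathcal X\to\mathcal X$ and $B:\mathcal U\to\mathcal X$ be linear maps with $B$ injective; $\mathcal R(B)$ is the range of $B$. Consider the system $x_{t+1}=Ax_t+Bu_t$ and a cost $g:\mathcal X\to\mathbb R_{\ge 0}$ with $g(x)=0\iff x=0$. Standing assumption: all minima appearing below are attained. Finite-horizon problem $(A,B,g,T)$ ($T>0$ integer): policies $\pi(x_0)=(\pi_t(x_0))_{t=0}^{T-1}\in\mathcal U^T$, cost $J(x_0,\pi)=\sum_{t=0}^T g(x_t)$ with $x_{t+1}=Ax_t+B\pi_t(x_0)$. Infinite-horizon problem $(A,B,g,\alpha)$ ($\alpha\in(0,1)$): policies $\pi(x_0)\in\mathcal U^{\mathbb Z_+}$, cost $J(x_0,\pi)=\sum_{t\ge0}\alpha^tg(x_t)$. In both, $J^*(x_0)=\min_\pi J(x_0,\pi)$ and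 a minimizing policy is optimal at $x_0$. In the infinite-horizon case $J^*$ satisfies $J^*(x)=g(x)+\alpha\min_{u}J^*(Ax+Bu)$. A decomposition of $\mathcal X$ over $A$ is a direct sum $\mathcal X=\mathcal X_1\oplus\cdots\oplus\mathcal X_r$ with $r>1$ and $A\mathcal X_i\subseteq\mathcal X_i$, $i\in\mathcal I=\{1,\dots,r\}$; $\rho_i:\mathcal X\to\mathcal X_i$ is the projection along the other summands. $\mathcal G_s$ is the set of $h:\mathcal X\to\mathbb R_{\ge0}$ with $h(x)=\sum_i h(\rho_i(x))$ for all $x$. $\mathcal E_i=\{u\in\mathcal U:Bu\in\mathcal X_i\}$. Subproblems $(A,B|_{\mathcal E_i},g,T)$ and $(A,B|_{\mathcal E_i},g,\alpha)$: the same problems for the system $x_{i,t+1}=Ax_{i,t}+B\bar u_{i,t}$ with states in $\mathcal X_i$ and inputs in $\mathcal E_i$; optimal costs $\bar J_i^*$, optimal policies $\bar\pi_i^*$. Definition 1: the family of subproblems is a decomposition of the original problem if for every $x\in\mathcal X$: $J^*(x)=\sum_i\bar J_i^*(\rho_i(x))$, and for every choice of optimal policies $\bar\pi_i^*(\rho_i(x))$ there exists an optimal policy $\pi^*(x)$ of the original problem with $\pi^*(x)=\sum_i\bar\pi_i^*(\rho_i(x))$ (componentwise sum). *)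

theory Defs
  imports Complex_Main "HOL-Library.Extended_Nonnegative_Real"
begin

definition direct_decomp :: "('f::field \<Rightarrow> 'x::ab_group_add \<Rightarrow> 'x) \<Rightarrow> nat set \<Rightarrow> (nat \<Rightarrow> 'x set) \<Rightarrow> bool" where
  "direct_decomp sX I Xs \<longleftrightarrow>
     (\<forall>i\<in>I. module.subspace sX (Xs i)) \<and>
     (\<forall>x. \<exists>!v. (\<forall>i\<in>I. v i \<in> Xs i) \<and> (\<forall>i. i \<notin> I \<longrightarrow> v i = 0) \<and> x = (\<Sum>i\<in>I. v i))"

definition proj :: "nat set \<Rightarrow> (nat \<Rightarrow> 'x::ab_group_add set) \<Rightarrow> nat \<Rightarrow> 'x \<Rightarrow> 'x" where
  "proj I Xs i x = (THE v. (\<forall>j\<in>I. v j \<in> Xs j) \<and> (\<forall>j. j \<notin> I \<longrightarrow> v j = 0) \<and> x = (\<Sum>j\<in>I. v j)) i"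

primrec traj :: "('x \<Rightarrow> 'x) \<Rightarrow> ('u \<Rightarrow> 'x) \<Rightarrow> 'x \<Rightarrow> (nat \<Rightarrow> 'u) \<Rightarrow> nat \<Rightarrow> 'x::plus" where
  "traj A B x0 u 0 = x0"
| "traj A B x0 u (Suc t) = A (traj A B x0 u t) + B (u t)"

text \<open>Finite-horizon cost  sum_{t=0}^T g(x_t); only u 0, ..., u (T-1) matter.\<close>
definition Jfin :: "('x::plus \<Rightarrow> 'x) \<Rightarrow> ('u \<Rightarrow> 'x) \<Rightarrow> ('x \<Rightarrow> real) \<Rightarrow> nat \<Rightarrow> 'x \<Rightarrow> (nat \<Rightarrow> 'u) \<Rightarrow> real" where
  "Jfin A B g T x0 u = (\<Sum>t\<le>T. g (traj A B x0 u t))"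

definition Jinf :: "('x::plus \<Rightarrow> 'x) \<Rightarrow> ('u \<Rightarrow> 'x) \<Rightarrow> ('x \<Rightarrow> real) \<Rightarrow> real \<Rightarrow> 'x \<Rightarrow> (nat \<Rightarrow> 'u) \<Rightarrow> ennreal" where
  "Jinf A B g \<alpha> x0 u = (\<Sum>t. ennreal (\<alpha> ^ t * g (traj A B x0 u t)))"

definition is_opt :: "(nat \<Rightarrow> 'u) set \<Rightarrow> ((nat \<Rightarrow> 'u) \<Rightarrow> 'c::linorder) \<Rightarrow> (nat \<Rightarrow> 'u) \<Rightarrow> bool" where
  "is_opt S J u \<longleftrightarrow> u \<in> S \<and> (\<forall>v\<in>S. J u \<le> J v)"

text \<open>Optimal cost J^* (a minimum, by the standing attainment assumption).\<close>
definition opt_val :: "(nat \<Rightarrow> 'u) set \<Rightarrow> ((nat \<Rightarrow> 'u) \<Rightarrow> 'c::conditionally_complete_linorder) \<Rightarrow> 'c" where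
  "opt_val S J = Inf (J ` S)"

text \<open>Admissible inputs: finite horizon policies in U^T (values after T irrelevant),
  resp. infinite sequences, with values in the input set E.\<close>
definition adm_fin :: "nat \<Rightarrow> 'u set \<Rightarrow> (nat \<Rightarrow> 'u) set" where
  "adm_fin T E = {u. \<forall>t<T. u t \<in> E}"

definition adm_inf :: "'u set \<Rightarrow> (nat \<Rightarrow> 'u) set" where
  "adm_inf E = {u. \<forall>t. u t \<in> E}"

definition Eset :: "('u \<Rightarrow> 'x) \<Rightarrow> 'x set \<Rightarrow> 'u set" where
  "Eset B Xi = {u. B u \<in> Xi}"

definition decomp_fin :: "nat set \<Rightarrow> (nat \<Rightarrow> 'x::ab_group_add set) \<Rightarrow> ('x \<Rightarrow> 'x) \<Rightarrow> ('u::ab_group_add \<Rightarrow> 'x) \<Rightarrow> ('x \<Rightarrow> real) \<Rightarrow> nat \<Rightarrow> bool" where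
  "decomp_fin I Xs A B g T \<longleftrightarrow>
     (\<forall>x. opt_val (adm_fin T UNIV) (Jfin A B g T x)
            = (\<Sum>i\<in>I. opt_val (adm_fin T (Eset B (Xs i))) (Jfin A B g T (proj I Xs i x)))
        \<and> (\<forall>us. (\<forall>i\<in>I. is_opt (adm_fin T (Eset B (Xs i))) (Jfin A B g T (proj I Xs i x)) (us i))
               \<longrightarrow> is_opt (adm_fin T UNIV) (Jfin A B g T x) (\<lambda>t. \<Sum>i\<in>I. us i t)))"

definition decomp_inf :: "nat set \<Rightarrow> (nat \<Rightarrow> 'x::ab_group_add set) \<Rightarrow> ('x \<Rightarrow> 'x) \<Rightarrow> ('u::ab_group_add \<Rightarrow> 'x) \<Rightarrow> ('x \<Rightarrow> real) \<Rightarrow> real \<Rightarrow> bool" where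
  "decomp_inf I Xs A B g \<alpha> \<longleftrightarrow>
     (\<forall>x. opt_val (adm_inf UNIV) (Jinf A B g \<alpha> x)
            = (\<Sum>i\<in>I. opt_val (adm_inf (Eset B (Xs i))) (Jinf A B g \<alpha> (proj I Xs i x)))
        \<and> (\<forall>us. (\<forall>i\<in>I. is_opt (adm_inf (Eset B (Xs i))) (Jinf A B g \<alpha> (proj I Xs i x)) (us i))
               \<longrightarrow> is_opt (adm_inf UNIV) (Jinf A B g \<alpha> x) (\<lambda>t. \<Sum>i\<in>I. us i t)))"

end

theory Submission
  imports Defs
begin


lemma proj_spec:
  assumes dec: "direct_decomp sX I Xs"
  shows "(\<forall>i\<in>I. proj I Xs i x \<in> Xs i) \<and> (\<forall>i. i \<notin> I \<longrightarrow> proj I Xs i x = 0) \<and> x = (\<Sum>i\<in>I. proj I Xs i x)"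
proof -
  let ?P = "\<lambda>v. (\<forall>j\<in>I. v j \<in> Xs j) \<and> (\<forall>j. j \<notin> I \<longrightarrow> v j = 0) \<and> x = (\<Sum>j\<in>I. v j)"
  have ex: "\<exists>!v. ?P v" using dec unfolding direct_decomp_def by blast
  have "?P (THE v. ?P v)" by (rule theI'[OF ex])
  moreover have "\<And>i. proj I Xs i x = (THE v. ?P v) i" unfolding proj_def by simp
  ultimately show ?thesis by simp
qed

lemma proj_unique:
  assumes dec: "direct_decomp sX I Xs"
    and v: "\<forall>j\<in>I. v j \<in> Xs j" "\<forall>j. j \<notin> I \<longrightarrow> v j = 0" "x = (\<Sum>j\<in>I. v j)"
  shows "proj I Xs i x = v i"
proof -
  let ?P = "\<lambda>v. (\<forall>j\<in>I. v j \<in> Xs j) \<and> (\<forall>j. j \<notin> I \<longrightarrow> v j = 0) \<and> x = (\<Sum>j\<in>I. v j)"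
  have ex: "\<exists>!v. ?P v" using dec unfolding direct_decomp_def by blast
  have "(THE v. ?P v) = v" by (rule the1_equality[OF ex]) (use v in blast)
  thus ?thesis unfolding proj_def by simp
qed

lemma proj_comp:
  assumes dec: "direct_decomp sX I Xs" and w: "\<forall>j\<in>I. w j \<in> Xs j" and i: "i \<in> I"
  shows "proj I Xs i (\<Sum>j\<in>I. w j) = w i"
proof -
  have "proj I Xs i (\<Sum>j\<in>I. w j) = (\<lambda>j. if j \<in> I then w j else 0) i"
    by (rule proj_unique[OF dec]) (use w in auto)
  thus ?thesis using i by simp
qed

lemma proj_add:
  assumes dec: "direct_decomp sX I Xs" and mod: "module sX"
  shows "proj I Xs i (x + y) = proj I Xs i x + proj I Xs i y"
proof -
  have sub: "\<forall>j\<in>I. module.subspace sX (Xs j)" using dec unfolding direct_decomp_def by blast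
  show ?thesis
  proof (rule proj_unique[OF dec])
    show "\<forall>j\<in>I. proj I Xs j x + proj I Xs j y \<in> Xs j"
      using sub proj_spec[OF dec] module.subspace_add[OF mod] by blast
    show "\<forall>j. j \<notin> I \<longrightarrow> proj I Xs j x + proj I Xs j y = 0"
      using proj_spec[OF dec] by simp
    show "x + y = (\<Sum>j\<in>I. proj I Xs j x + proj I Xs j y)"
      using proj_spec[OF dec, of x] proj_spec[OF dec, of y] by (simp add: sum.distrib)
  qed
qed

lemma proj_A:
  assumes dec: "direct_decomp sX I Xs" and hA: "module_hom sX sX A"
    and inv: "\<forall>i\<in>I. A ` Xs i \<subseteq> Xs i"
  shows "proj I Xs i (A x) = A (proj I Xs i x)"
proof (rule proj_unique[OF dec])
  show "\<forall>j\<in>I. A (proj I Xs j x) \<in> Xs j" using inv proj_spec[OF dec] by blast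
  show "\<forall>j. j \<notin> I \<longrightarrow> A (proj I Xs j x) = 0"
    using proj_spec[OF dec] module_hom.zero[OF hA] by simp
  have "A x = A (\<Sum>j\<in>I. proj I Xs j x)" using proj_spec[OF dec, of x] by simp
  also have "\<dots> = (\<Sum>j\<in>I. A (proj I Xs j x))" by (rule module_hom.sum[OF hA])
  finally show "A x = (\<Sum>j\<in>I. A (proj I Xs j x))" .
qed

lemma traj_proj:
  assumes dec: "direct_decomp sX I Xs" and mod: "module sX"
    and hA: "module_hom sX sX A" and inv: "\<forall>i\<in>I. A ` Xs i \<subseteq> Xs i"
    and hB: "\<forall>s<n. (\<forall>i\<in>I. B (us i s) \<in> Xs i) \<and> B (W s) = (\<Sum>i\<in>I. B (us i s))"
    and i: "i \<in> I"
  shows "proj I Xs i (traj A B x W n) = traj A B (proj I Xs i x) (us i) n"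
  using hB
proof (induction n)
  case 0
  then show ?case by simp
next
  case (Suc n)
  have IH: "proj I Xs i (traj A B x W n) = traj A B (proj I Xs i x) (us i) n"
    using Suc by simp
  have h: "(\<forall>i\<in>I. B (us i n) \<in> Xs i) \<and> B (W n) = (\<Sum>i\<in>I. B (us i n))" using Suc.prems by simp
  have "proj I Xs i (traj A B x W (Suc n)) = proj I Xs i (A (traj A B x W n)) + proj I Xs i (B (W n))"
    by (simp add: proj_add[OF dec mod])
  also have "\<dots> = A (traj A B (proj I Xs i x) (us i) n) + B (us i n)"
    using proj_A[OF dec hA inv] IH h proj_comp[OF dec _ i, of "\<lambda>j. B (us j n)"] by simp
  finally show ?case by simp
qed



lemma opt_val_eq:
  fixes J :: "(nat \<Rightarrow> 'u) \<Rightarrow> 'c::conditionally_complete_linorder"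
  assumes "is_opt S J u" shows "opt_val S J = J u"
  using assms unfolding is_opt_def opt_val_def
  by (intro cInf_eq_minimum) auto

lemma Jfin_dec:
  assumes dec: "direct_decomp sX I Xs" and mod: "module sX"
    and hA: "module_hom sX sX A" and inv: "\<forall>i\<in>I. A ` Xs i \<subseteq> Xs i"
    and hB: "\<forall>s<T. (\<forall>i\<in>I. B (us i s) \<in> Xs i) \<and> B (W s) = (\<Sum>i\<in>I. B (us i s))"
    and gs: "\<forall>x. g x = (\<Sum>i\<in>I. g (proj I Xs i x))"
  shows "Jfin A B g T x W = (\<Sum>i\<in>I. Jfin A B g T (proj I Xs i x) (us i))"
proof -
  have "Jfin A B g T x W = (\<Sum>t\<le>T. \<Sum>i\<in>I. g (traj A B (proj I Xs i x) (us i) t))"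
    unfolding Jfin_def
  proof (rule sum.cong[OF refl])
    fix t assume t: "t \<in> {..T}"
    have "g (traj A B x W t) = (\<Sum>i\<in>I. g (proj I Xs i (traj A B x W t)))" using gs by blast
    also have "\<dots> = (\<Sum>i\<in>I. g (traj A B (proj I Xs i x) (us i) t))"
    proof (rule sum.cong[OF refl])
      fix i assume i: "i \<in> I"
      have "\<forall>s<t. (\<forall>i\<in>I. B (us i s) \<in> Xs i) \<and> B (W s) = (\<Sum>i\<in>I. B (us i s))"
        using hB t by auto
      from traj_proj[where B=B and us=us and W=W and n=t, OF dec mod hA inv this i] show "g (proj I Xs i (traj A B x W t)) = g (traj A B (proj I Xs i x) (us i) t)"
        by simp
    qed
    finally show "g (traj A B x W t) = (\<Sum>i\<in>I. g (traj A B (proj I Xs i x) (us i) t))" .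
  qed
  also have "\<dots> = (\<Sum>i\<in>I. Jfin A B g T (proj I Xs i x) (us i))"
    unfolding Jfin_def by (rule sum.swap)
  finally show ?thesis .
qed

lemma Jinf_dec:
  assumes dec: "direct_decomp sX I Xs" and mod: "module sX"
    and hA: "module_hom sX sX A" and inv: "\<forall>i\<in>I. A ` Xs i \<subseteq> Xs i"
    and hB: "\<forall>s. (\<forall>i\<in>I. B (us i s) \<in> Xs i) \<and> B (W s) = (\<Sum>i\<in>I. B (us i s))"
    and gs: "\<forall>x. g x = (\<Sum>i\<in>I. g (proj I Xs i x))"
    and gn: "\<forall>x. g x \<ge> 0" and al: "\<alpha> \<ge> 0"
  shows "Jinf A B g \<alpha> x W = (\<Sum>i\<in>I. Jinf A B g \<alpha> (proj I Xs i x) (us i))"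
proof -
  have "Jinf A B g \<alpha> x W = (\<Sum>t. \<Sum>i\<in>I. ennreal (\<alpha> ^ t * g (traj A B (proj I Xs i x) (us i) t)))"
    unfolding Jinf_def
  proof (rule arg_cong[where f=suminf], rule ext)
    fix t
    have "g (traj A B x W t) = (\<Sum>i\<in>I. g (proj I Xs i (traj A B x W t)))" using gs by blast
    also have "\<dots> = (\<Sum>i\<in>I. g (traj A B (proj I Xs i x) (us i) t))"
    proof (rule sum.cong[OF refl])
      fix i assume i: "i \<in> I"
      have "\<forall>s<t. (\<forall>i\<in>I. B (us i s) \<in> Xs i) \<and> B (W s) = (\<Sum>i\<in>I. B (us i s))"
        using hB by auto
      from traj_proj[where B=B and us=us and W=W and n=t, OF dec mod hA inv this i] show "g (proj I Xs i (traj A B x W t)) = g (traj A B (proj I Xs i x) (us i) t)"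
        by simp
    qed
    finally have "\<alpha> ^ t * g (traj A B x W t) = (\<Sum>i\<in>I. \<alpha> ^ t * g (traj A B (proj I Xs i x) (us i) t))"
      by (simp add: sum_distrib_left)
    thus "ennreal (\<alpha> ^ t * g (traj A B x W t)) = (\<Sum>i\<in>I. ennreal (\<alpha> ^ t * g (traj A B (proj I Xs i x) (us i) t)))"
      using gn al by (simp add: sum_ennreal)
  qed
  also have "\<dots> = (\<Sum>i\<in>I. Jinf A B g \<alpha> (proj I Xs i x) (us i))"
    unfolding Jinf_def by (rule suminf_sum) simp
  finally show ?thesis .
qed

lemma range_split:
  assumes RB: "range B \<subseteq> {(\<Sum>i\<in>I. v i) | v. \<forall>i\<in>I. v i \<in> range B \<inter> Xs i}"
  shows "\<exists>F. \<forall>t. (\<forall>i\<in>I. B (F t i) \<in> Xs i) \<and> B (v t) = (\<Sum>i\<in>I. B (F t i))"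
proof -
  have "\<forall>t. \<exists>f. (\<forall>i\<in>I. B (f i) \<in> Xs i) \<and> B (v t) = (\<Sum>i\<in>I. B (f i))"
  proof
    fix t
    obtain w where w: "B (v t) = (\<Sum>i\<in>I. w i)" "\<forall>i\<in>I. w i \<in> range B \<inter> Xs i"
      using RB by blast
    have "\<forall>i\<in>I. \<exists>a. w i = B a" using w(2) by blast
    then obtain f where f: "\<forall>i\<in>I. w i = B (f i)" by metis
    show "\<exists>f. (\<forall>i\<in>I. B (f i) \<in> Xs i) \<and> B (v t) = (\<Sum>i\<in>I. B (f i))"
      using f w by (intro exI[of _ f]) (auto intro: sum.cong)
  qed
  thus ?thesis by metis
qed



lemma fwd_fin:
  fixes B :: "'u::ab_group_add \<Rightarrow> 'x::ab_group_add"
  assumes dec: "direct_decomp sX I Xs" and mod: "module sX"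
    and hA: "module_hom sX sX A" and inv: "\<forall>i\<in>I. A ` Xs i \<subseteq> Xs i"
    and hBl: "module_hom sU sX B"
    and gs: "\<forall>x. g x = (\<Sum>i\<in>I. g (proj I Xs i x))"
    and RB: "range B \<subseteq> {(\<Sum>i\<in>I. v i) | v. \<forall>i\<in>I. v i \<in> range B \<inter> Xs i}"
    and att: "\<forall>i\<in>I. \<forall>x\<in>Xs i. \<exists>u. is_opt (adm_fin T (Eset B (Xs i))) (Jfin A B g T x) u"
  shows "decomp_fin I Xs A B g T"
  unfolding decomp_fin_def
proof (intro allI)
  fix x
  have key: "is_opt (adm_fin T UNIV) (Jfin A B g T x) (\<lambda>t. \<Sum>i\<in>I. us i t)
     \<and> opt_val (adm_fin T UNIV) (Jfin A B g T x) = (\<Sum>i\<in>I. opt_val (adm_fin T (Eset B (Xs i))) (Jfin A B g T (proj I Xs i x)))"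
    if us: "\<forall>i\<in>I. is_opt (adm_fin T (Eset B (Xs i))) (Jfin A B g T (proj I Xs i x)) (us i)" for us
  proof -
    let ?W = "\<lambda>t. \<Sum>i\<in>I. us i t"
    have hB: "\<forall>s<T. (\<forall>i\<in>I. B (us i s) \<in> Xs i) \<and> B (?W s) = (\<Sum>i\<in>I. B (us i s))"
    proof (intro allI impI conjI ballI)
      fix s i assume "s < T" "i \<in> I"
      thus "B (us i s) \<in> Xs i"  using us unfolding is_opt_def adm_fin_def Eset_def by blast
    next
      fix s show "B (\<Sum>i\<in>I. us i s) = (\<Sum>i\<in>I. B (us i s))" by (rule module_hom.sum[OF hBl])
    qed
    have JW: "Jfin A B g T x ?W = (\<Sum>i\<in>I. Jfin A B g T (proj I Xs i x) (us i))"
      by (rule Jfin_dec[where B=B and us=us and W="\<lambda>t. \<Sum>i\<in>I. us i t", OF dec mod hA inv hB gs])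
    have opt: "is_opt (adm_fin T UNIV) (Jfin A B g T x) ?W"
      unfolding is_opt_def
    proof (intro conjI ballI)
      show "?W \<in> adm_fin T UNIV" by (simp add: adm_fin_def)
      fix v :: "nat \<Rightarrow> 'u" assume "v \<in> adm_fin T UNIV"
      obtain F where F: "\<forall>t. (\<forall>i\<in>I. B (F t i) \<in> Xs i) \<and> B (v t) = (\<Sum>i\<in>I. B (F t i))"
        using range_split[where v=v, OF RB] by (elim exE) blast
      have hF: "\<forall>s<T. (\<forall>i\<in>I. B ((\<lambda>i t. F t i) i s) \<in> Xs i) \<and> B (v s) = (\<Sum>i\<in>I. B ((\<lambda>i t. F t i) i s))"
        using F by simp
      have Jv: "Jfin A B g T x v = (\<Sum>i\<in>I. Jfin A B g T (proj I Xs i x) (\<lambda>t. F t i))"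
        using Jfin_dec[where B=B and us="\<lambda>i t. F t i" and W=v, OF dec mod hA inv hF gs] by simp
      have "\<forall>i\<in>I. Jfin A B g T (proj I Xs i x) (us i) \<le> Jfin A B g T (proj I Xs i x) (\<lambda>t. F t i)"
      proof
        fix i assume i: "i \<in> I"
        have "(\<lambda>t. F t i) \<in> adm_fin T (Eset B (Xs i))" using F i by (simp add: adm_fin_def Eset_def)
        thus "Jfin A B g T (proj I Xs i x) (us i) \<le> Jfin A B g T (proj I Xs i x) (\<lambda>t. F t i)"
          using us i unfolding is_opt_def by blast
      qed
      hence "(\<Sum>i\<in>I. Jfin A B g T (proj I Xs i x) (us i)) \<le> (\<Sum>i\<in>I. Jfin A B g T (proj I Xs i x) (\<lambda>t. F t i))"
        by (intro sum_mono) auto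
      thus "Jfin A B g T x ?W \<le> Jfin A B g T x v" using JW Jv by simp
    qed
    have "opt_val (adm_fin T UNIV) (Jfin A B g T x) = Jfin A B g T x ?W" by (rule opt_val_eq[OF opt])
    also have "\<dots> = (\<Sum>i\<in>I. opt_val (adm_fin T (Eset B (Xs i))) (Jfin A B g T (proj I Xs i x)))"
      unfolding JW by (rule sum.cong[OF refl], rule opt_val_eq[symmetric]) (use us in blast)
    finally show ?thesis using opt by simp
  qed
  have "\<forall>i\<in>I. \<exists>u. is_opt (adm_fin T (Eset B (Xs i))) (Jfin A B g T (proj I Xs i x)) u"
  proof
    fix i assume i: "i \<in> I"
    then have "proj I Xs i x \<in> Xs i" using proj_spec[OF dec, of x] by blast
    then show "\<exists>u. is_opt (adm_fin T (Eset B (Xs i))) (Jfin A B g T (proj I Xs i x)) u" using att i by blast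
  qed
  from bchoice[OF this] obtain us0 where "\<forall>i\<in>I. is_opt (adm_fin T (Eset B (Xs i))) (Jfin A B g T (proj I Xs i x)) (us0 i)"
    by blast
  note k0 = key[OF this]
  show "opt_val (adm_fin T UNIV) (Jfin A B g T x) = (\<Sum>i\<in>I. opt_val (adm_fin T (Eset B (Xs i))) (Jfin A B g T (proj I Xs i x))) \<and>
         (\<forall>us. (\<forall>i\<in>I. is_opt (adm_fin T (Eset B (Xs i))) (Jfin A B g T (proj I Xs i x)) (us i)) \<longrightarrow>
               is_opt (adm_fin T UNIV) (Jfin A B g T x) (\<lambda>t. \<Sum>i\<in>I. us i t))"
    using k0 key by simp
qed

lemma fwd_inf:
  fixes B :: "'u::ab_group_add \<Rightarrow> 'x::ab_group_add"
  assumes dec: "direct_decomp sX I Xs" and mod: "module sX"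
    and hA: "module_hom sX sX A" and inv: "\<forall>i\<in>I. A ` Xs i \<subseteq> Xs i"
    and hBl: "module_hom sU sX B"
    and gs: "\<forall>x. g x = (\<Sum>i\<in>I. g (proj I Xs i x))"
    and gn: "\<forall>x. g x \<ge> 0" and al: "\<alpha> \<ge> 0"
    and RB: "range B \<subseteq> {(\<Sum>i\<in>I. v i) | v. \<forall>i\<in>I. v i \<in> range B \<inter> Xs i}"
    and att: "\<forall>i\<in>I. \<forall>x\<in>Xs i. \<exists>u. is_opt (adm_inf (Eset B (Xs i))) (Jinf A B g \<alpha> x) u"
  shows "decomp_inf I Xs A B g \<alpha>"
  unfolding decomp_inf_def
proof (intro allI)
  fix x
  have key: "is_opt (adm_inf UNIV) (Jinf A B g \<alpha> x) (\<lambda>t. \<Sum>i\<in>I. us i t)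
     \<and> opt_val (adm_inf UNIV) (Jinf A B g \<alpha> x) = (\<Sum>i\<in>I. opt_val (adm_inf (Eset B (Xs i))) (Jinf A B g \<alpha> (proj I Xs i x)))"
    if us: "\<forall>i\<in>I. is_opt (adm_inf (Eset B (Xs i))) (Jinf A B g \<alpha> (proj I Xs i x)) (us i)" for us
  proof -
    let ?W = "\<lambda>t. \<Sum>i\<in>I. us i t"
    have hB: "\<forall>s. (\<forall>i\<in>I. B (us i s) \<in> Xs i) \<and> B (?W s) = (\<Sum>i\<in>I. B (us i s))"
    proof (intro allI impI conjI ballI)
      fix s i assume "i \<in> I"
      thus "B (us i s) \<in> Xs i"  using us unfolding is_opt_def adm_inf_def Eset_def by blast
    next
      fix s show "B (\<Sum>i\<in>I. us i s) = (\<Sum>i\<in>I. B (us i s))" by (rule module_hom.sum[OF hBl])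
    qed
    have JW: "Jinf A B g \<alpha> x ?W = (\<Sum>i\<in>I. Jinf A B g \<alpha> (proj I Xs i x) (us i))"
      by (rule Jinf_dec[where B=B and us=us and W="\<lambda>t. \<Sum>i\<in>I. us i t", OF dec mod hA inv hB gs gn al])
    have opt: "is_opt (adm_inf UNIV) (Jinf A B g \<alpha> x) ?W"
      unfolding is_opt_def
    proof (intro conjI ballI)
      show "?W \<in> adm_inf UNIV" by (simp add: adm_inf_def)
      fix v :: "nat \<Rightarrow> 'u" assume "v \<in> adm_inf UNIV"
      obtain F where F: "\<forall>t. (\<forall>i\<in>I. B (F t i) \<in> Xs i) \<and> B (v t) = (\<Sum>i\<in>I. B (F t i))"
        using range_split[where v=v, OF RB] by (elim exE) blast
      have hF: "\<forall>s. (\<forall>i\<in>I. B ((\<lambda>i t. F t i) i s) \<in> Xs i) \<and> B (v s) = (\<Sum>i\<in>I. B ((\<lambda>i t. F t i) i s))"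
        using F by simp
      have Jv: "Jinf A B g \<alpha> x v = (\<Sum>i\<in>I. Jinf A B g \<alpha> (proj I Xs i x) (\<lambda>t. F t i))"
        using Jinf_dec[where B=B and us="\<lambda>i t. F t i" and W=v, OF dec mod hA inv hF gs gn al] by simp
      have "\<forall>i\<in>I. Jinf A B g \<alpha> (proj I Xs i x) (us i) \<le> Jinf A B g \<alpha> (proj I Xs i x) (\<lambda>t. F t i)"
      proof
        fix i assume i: "i \<in> I"
        have "(\<lambda>t. F t i) \<in> adm_inf (Eset B (Xs i))" using F i by (simp add: adm_inf_def Eset_def)
        thus "Jinf A B g \<alpha> (proj I Xs i x) (us i) \<le> Jinf A B g \<alpha> (proj I Xs i x) (\<lambda>t. F t i)"
          using us i unfolding is_opt_def by blast
      qed
      hence "(\<Sum>i\<in>I. Jinf A B g \<alpha> (proj I Xs i x) (us i)) \<le> (\<Sum>i\<in>I. Jinf A B g \<alpha> (proj I Xs i x) (\<lambda>t. F t i))"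
        by (intro sum_mono) auto
      thus "Jinf A B g \<alpha> x ?W \<le> Jinf A B g \<alpha> x v" using JW Jv by simp
    qed
    have "opt_val (adm_inf UNIV) (Jinf A B g \<alpha> x) = Jinf A B g \<alpha> x ?W" by (rule opt_val_eq[OF opt])
    also have "\<dots> = (\<Sum>i\<in>I. opt_val (adm_inf (Eset B (Xs i))) (Jinf A B g \<alpha> (proj I Xs i x)))"
      unfolding JW by (rule sum.cong[OF refl], rule opt_val_eq[symmetric]) (use us in blast)
    finally show ?thesis using opt by simp
  qed
  have "\<forall>i\<in>I. \<exists>u. is_opt (adm_inf (Eset B (Xs i))) (Jinf A B g \<alpha> (proj I Xs i x)) u"
  proof
    fix i assume i: "i \<in> I"
    then have "proj I Xs i x \<in> Xs i" using proj_spec[OF dec, of x] by blast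
    then show "\<exists>u. is_opt (adm_inf (Eset B (Xs i))) (Jinf A B g \<alpha> (proj I Xs i x)) u" using att i by blast
  qed
  from bchoice[OF this] obtain us0 where "\<forall>i\<in>I. is_opt (adm_inf (Eset B (Xs i))) (Jinf A B g \<alpha> (proj I Xs i x)) (us0 i)"
    by blast
  note k0 = key[OF this]
  show "opt_val (adm_inf UNIV) (Jinf A B g \<alpha> x) = (\<Sum>i\<in>I. opt_val (adm_inf (Eset B (Xs i))) (Jinf A B g \<alpha> (proj I Xs i x))) \<and>
         (\<forall>us. (\<forall>i\<in>I. is_opt (adm_inf (Eset B (Xs i))) (Jinf A B g \<alpha> (proj I Xs i x)) (us i)) \<longrightarrow>
               is_opt (adm_inf UNIV) (Jinf A B g \<alpha> x) (\<lambda>t. \<Sum>i\<in>I. us i t))"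
    using k0 key by simp
qed



lemma set_sub_range:
  assumes hBl: "module_hom sU sX B"
  shows "{(\<Sum>i\<in>I. v i) | v. \<forall>i\<in>I. v i \<in> range B \<inter> Xs i} \<subseteq> range B"
proof
  fix y assume "y \<in> {(\<Sum>i\<in>I. v i) | v. \<forall>i\<in>I. v i \<in> range B \<inter> Xs i}"
  then obtain v where v: "y = (\<Sum>i\<in>I. v i)" "\<forall>i\<in>I. v i \<in> range B" by blast
  then have "\<forall>i\<in>I. \<exists>a. v i = B a" by blast
  from bchoice[OF this] obtain a where a: "\<forall>i\<in>I. v i = B (a i)" by blast
  have "y = (\<Sum>i\<in>I. B (a i))" using v(1) a by simp
  also have "\<dots> = B (\<Sum>i\<in>I. a i)" by (rule module_hom.sum[OF hBl, symmetric])
  finally show "y \<in> range B" by simp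
qed

lemma traj_reset:
  assumes hA: "module_hom sX sX A" and hBl: "module_hom sU sX B" and x0: "A x0 = - B u"
  shows "traj A B x0 (\<lambda>t. if t = 0 then u else 0) (Suc t) = 0"
proof (induction t)
  case 0 show ?case using x0 by simp
next
  case (Suc t) then show ?case using module_hom.zero[OF hA] module_hom.zero[OF hBl] by simp
qed

lemma step1_zero:
  fixes B :: "'u \<Rightarrow> 'x::ab_group_add"
  assumes x0: "A y = - B u" and z: "traj A B y W 1 = 0"
  shows "B u = B (W 0)"
proof -
  have "A y + B (W 0) = 0" using z by simp
  then have "- B u + B (W 0) = 0" using x0 by simp
  moreover have "B u + (- B u + B (W 0)) = B (W 0)" by simp
  ultimately show ?thesis by simp
qed

lemma rev_fin:
  fixes B :: "'u::ab_group_add \<Rightarrow> 'x::ab_group_add"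
  assumes dec: "direct_decomp sX I Xs"
    and hA: "module_hom sX sX A" and hBl: "module_hom sU sX B" and sA: "surj A"
    and gn: "\<forall>x. g x \<ge> 0" and gz: "\<forall>x. g x = 0 \<longleftrightarrow> x = 0" and T: "T > 0"
    and D: "decomp_fin I Xs A B g T"
    and att: "\<forall>i\<in>I. \<forall>x\<in>Xs i. \<exists>u. is_opt (adm_fin T (Eset B (Xs i))) (Jfin A B g T x) u"
  shows "B u \<in> {(\<Sum>i\<in>I. v i) | v. \<forall>i\<in>I. v i \<in> range B \<inter> Xs i}"
proof -
  define x0 where "x0 = inv A (- B u)"
  have x0: "A x0 = - B u" unfolding x0_def by (rule surj_f_inv_f[OF sA])
  have "\<forall>i\<in>I. \<exists>u. is_opt (adm_fin T (Eset B (Xs i))) (Jfin A B g T (proj I Xs i x0)) u"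
  proof
    fix i assume i: "i \<in> I"
    then have "proj I Xs i x0 \<in> Xs i" using proj_spec[OF dec, of x0] by blast
    then show "\<exists>u. is_opt (adm_fin T (Eset B (Xs i))) (Jfin A B g T (proj I Xs i x0)) u" using att i by blast
  qed
  from bchoice[OF this] obtain us where us: "\<forall>i\<in>I. is_opt (adm_fin T (Eset B (Xs i))) (Jfin A B g T (proj I Xs i x0)) (us i)"
    by blast
  let ?W = "\<lambda>t. \<Sum>i\<in>I. us i t"
  have opt: "is_opt (adm_fin T UNIV) (Jfin A B g T x0) ?W" using D us unfolding decomp_fin_def by blast
  let ?u' = "\<lambda>t. if t = 0 then u else (0::'u)"
  obtain T' where T': "T = Suc T'" using T by (cases T) auto
  have "Jfin A B g T x0 ?u' = g x0 + (\<Sum>t\<le>T'. g (traj A B x0 ?u' (Suc t)))"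
    unfolding Jfin_def T' by (simp only: sum.atMost_Suc_shift traj.simps(1))
  also have "\<dots> = g x0" using traj_reset[OF hA hBl x0] gz by simp
  finally have J1: "Jfin A B g T x0 ?u' = g x0" .
  have "g x0 + g (traj A B x0 ?W 1) \<le> g x0 + (\<Sum>t\<le>T'. g (traj A B x0 ?W (Suc t)))"
    using member_le_sum[of 0 "{..T'}" "\<lambda>t. g (traj A B x0 ?W (Suc t))"] gn by simp
  also have "\<dots> = Jfin A B g T x0 ?W"
    unfolding Jfin_def T' by (simp only: sum.atMost_Suc_shift traj.simps(1))
  also have "\<dots> \<le> Jfin A B g T x0 ?u'" using opt unfolding is_opt_def adm_fin_def by simp
  finally have "g (traj A B x0 ?W 1) \<le> 0" using J1 by simp
  then have "traj A B x0 ?W 1 = 0" using gn gz by (meson order_antisym)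
  then have Bu: "B u = B (?W 0)" by (rule step1_zero[where A=A and B=B and y=x0 and u=u and W="\<lambda>t. \<Sum>i\<in>I. us i t", OF x0])
  also have "\<dots> = (\<Sum>i\<in>I. B (us i 0))" by (rule module_hom.sum[OF hBl])
  finally have "B u = (\<Sum>i\<in>I. B (us i 0))" .
  moreover have "\<forall>i\<in>I. B (us i 0) \<in> range B \<inter> Xs i"
    using us T unfolding is_opt_def adm_fin_def Eset_def by blast
  ultimately show ?thesis by blast
qed

lemma rev_inf:
  fixes B :: "'u::ab_group_add \<Rightarrow> 'x::ab_group_add"
  assumes dec: "direct_decomp sX I Xs"
    and hA: "module_hom sX sX A" and hBl: "module_hom sU sX B" and sA: "surj A"
    and gn: "\<forall>x. g x \<ge> 0" and gz: "\<forall>x. g x = 0 \<longleftrightarrow> x = 0" and al: "\<alpha> > 0"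
    and D: "decomp_inf I Xs A B g \<alpha>"
    and att: "\<forall>i\<in>I. \<forall>x\<in>Xs i. \<exists>u. is_opt (adm_inf (Eset B (Xs i))) (Jinf A B g \<alpha> x) u"
  shows "B u \<in> {(\<Sum>i\<in>I. v i) | v. \<forall>i\<in>I. v i \<in> range B \<inter> Xs i}"
proof -
  define x0 where "x0 = inv A (- B u)"
  have x0: "A x0 = - B u" unfolding x0_def by (rule surj_f_inv_f[OF sA])
  have "\<forall>i\<in>I. \<exists>u. is_opt (adm_inf (Eset B (Xs i))) (Jinf A B g \<alpha> (proj I Xs i x0)) u"
  proof
    fix i assume i: "i \<in> I"
    then have "proj I Xs i x0 \<in> Xs i" using proj_spec[OF dec, of x0] by blast
    then show "\<exists>u. is_opt (adm_inf (Eset B (Xs i))) (Jinf A B g \<alpha> (proj I Xs i x0)) u" using att i by blast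
  qed
  from bchoice[OF this] obtain us where us: "\<forall>i\<in>I. is_opt (adm_inf (Eset B (Xs i))) (Jinf A B g \<alpha> (proj I Xs i x0)) (us i)"
    by blast
  let ?W = "\<lambda>t. \<Sum>i\<in>I. us i t"
  have opt: "is_opt (adm_inf UNIV) (Jinf A B g \<alpha> x0) ?W" using D us unfolding decomp_inf_def by blast
  let ?u' = "\<lambda>t. if t = 0 then u else (0::'u)"
  have "Jinf A B g \<alpha> x0 ?u' = (\<Sum>t\<in>{0}. ennreal (\<alpha> ^ t * g (traj A B x0 ?u' t)))"
    unfolding Jinf_def
  proof (rule suminf_finite)
    fix n :: nat assume "n \<notin> {0}"
    then obtain m where "n = Suc m" by (cases n) auto
    then have "traj A B x0 ?u' n = 0" using traj_reset[OF hA hBl x0, of m] by simp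
    moreover have "g 0 = 0" using gz by simp
    ultimately show "ennreal (\<alpha> ^ n * g (traj A B x0 ?u' n)) = 0" by simp
  qed simp
  then have J1: "Jinf A B g \<alpha> x0 ?u' = ennreal (g x0)" by simp
  let ?f = "\<lambda>t. ennreal (\<alpha> ^ t * g (traj A B x0 ?W t))"
  have "ennreal (g x0 + \<alpha> * g (traj A B x0 ?W 1)) = (\<Sum>t\<in>{0,1}. ?f t)"
    using gn al by (simp add: ennreal_plus)
  also have "\<dots> \<le> Jinf A B g \<alpha> x0 ?W"
    unfolding Jinf_def by (rule sum_le_suminf) auto
  also have "\<dots> \<le> Jinf A B g \<alpha> x0 ?u'" using opt unfolding is_opt_def adm_inf_def by simp
  finally have "g x0 + \<alpha> * g (traj A B x0 ?W 1) \<le> g x0" using J1 gn by (simp add: ennreal_le_iff)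
  then have "\<alpha> * g (traj A B x0 ?W 1) \<le> 0" by simp
  then have "g (traj A B x0 ?W 1) \<le> 0" using al by (simp add: mult_le_0_iff)
  then have "traj A B x0 ?W 1 = 0" using gn gz by (meson order_antisym)
  then have Bu: "B u = B (?W 0)" by (rule step1_zero[where A=A and B=B and y=x0 and u=u and W="\<lambda>t. \<Sum>i\<in>I. us i t", OF x0])
  also have "\<dots> = (\<Sum>i\<in>I. B (us i 0))" by (rule module_hom.sum[OF hBl])
  finally have "B u = (\<Sum>i\<in>I. B (us i 0))" .
  moreover have "\<forall>i\<in>I. B (us i 0) \<in> range B \<inter> Xs i"
    using us unfolding is_opt_def adm_inf_def Eset_def by blast
  ultimately show ?thesis by blast
qed


theorem theorem2:
  fixes sX :: "'f::field \<Rightarrow> 'x::ab_group_add \<Rightarrow> 'x"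
    and sU :: "'f \<Rightarrow> 'u::ab_group_add \<Rightarrow> 'u"
    and BasX :: "'x set" and BasU :: "'u set"
    and A :: "'x \<Rightarrow> 'x" and B :: "'u \<Rightarrow> 'x"
    and r :: nat and Xs :: "nat \<Rightarrow> 'x set"
    and g :: "'x \<Rightarrow> real" and \<alpha> :: real
  assumes fdX: "finite_dimensional_vector_space sX BasX"
    and fdU: "finite_dimensional_vector_space sU BasU"
    and linA: "Vector_Spaces.linear sX sX A"
    and linB: "Vector_Spaces.linear sU sX B"
    and injB: "inj B"
    and invA: "bij A"
    and r_gt: "r > 1"
    and dec: "direct_decomp sX {1..r} Xs"
    and inv: "\<forall>i\<in>{1..r}. A ` Xs i \<subseteq> Xs i"
    and g_nonneg: "\<forall>x. g x \<ge> 0"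
    and g_zero: "\<forall>x. g x = 0 \<longleftrightarrow> x = 0"
    and g_sep: "\<forall>x. g x = (\<Sum>i\<in>{1..r}. g (proj {1..r} Xs i x))"
    and alpha: "0 < \<alpha>" "\<alpha> < 1"
    and att_fin: "\<forall>T>0. \<forall>x. \<exists>u. is_opt (adm_fin T UNIV) (Jfin A B g T x) u"
    and att_fin_sub: "\<forall>T>0. \<forall>i\<in>{1..r}. \<forall>x\<in>Xs i.
                        \<exists>u. is_opt (adm_fin T (Eset B (Xs i))) (Jfin A B g T x) u"
    and att_inf: "\<forall>x. \<exists>u. is_opt (adm_inf UNIV) (Jinf A B g \<alpha> x) u"
    and att_inf_sub: "\<forall>i\<in>{1..r}. \<forall>x\<in>Xs i.
                        \<exists>u. is_opt (adm_inf (Eset B (Xs i))) (Jinf A B g \<alpha> x) u"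
  shows "(range B = {(\<Sum>i\<in>{1..r}. v i) | v. \<forall>i\<in>{1..r}. v i \<in> range B \<inter> Xs i}
            \<longleftrightarrow> (\<forall>T>0. decomp_fin {1..r} Xs A B g T))
       \<and> ((\<forall>T>0. decomp_fin {1..r} Xs A B g T) \<longleftrightarrow> decomp_inf {1..r} Xs A B g \<alpha>)"
  proof -
  let ?I = "{1..r::nat}"
  have mod: "module sX" using fdX finite_dimensional_vector_space.axioms(1) module_iff_vector_space by blast
  have hA: "module_hom sX sX A" using linA by (simp add: linear_iff_module_hom)
  have hBl: "module_hom sU sX B" using linB by (simp add: linear_iff_module_hom)
  have sA: "surj A" using invA bij_is_surj by blast
  have sub: "{(\<Sum>i\<in>?I. v i) | v. \<forall>i\<in>?I. v i \<in> range B \<inter> Xs i} \<subseteq> range B"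
    by (rule set_sub_range[OF hBl])
  have a_fin: "(range B = {(\<Sum>i\<in>?I. v i) | v. \<forall>i\<in>?I. v i \<in> range B \<inter> Xs i})
       \<longleftrightarrow> (\<forall>T>0. decomp_fin ?I Xs A B g T)"
  proof
    assume RB: "range B = {(\<Sum>i\<in>?I. v i) | v. \<forall>i\<in>?I. v i \<in> range B \<inter> Xs i}"
    show "\<forall>T>0. decomp_fin ?I Xs A B g T"
    proof (intro allI impI)
      fix T :: nat assume T: "T > 0"
      show "decomp_fin ?I Xs A B g T"
        by (rule fwd_fin[OF dec mod hA inv hBl g_sep]) (use RB att_fin_sub T in auto)
    qed
  next
    assume D: "\<forall>T>0. decomp_fin ?I Xs A B g T"
    have "range B \<subseteq> {(\<Sum>i\<in>?I. v i) | v. \<forall>i\<in>?I. v i \<in> range B \<inter> Xs i}"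
    proof
      fix y assume "y \<in> range B"
      then obtain u where y: "y = B u" by blast
      have T1: "(1::nat) > 0" by simp
      show "y \<in> {(\<Sum>i\<in>?I. v i) | v. \<forall>i\<in>?I. v i \<in> range B \<inter> Xs i}"
        unfolding y
        by (rule rev_fin[OF dec hA hBl sA g_nonneg g_zero T1]) (use D att_fin_sub in auto)
    qed
    then show "range B = {(\<Sum>i\<in>?I. v i) | v. \<forall>i\<in>?I. v i \<in> range B \<inter> Xs i}"
      using sub by blast
  qed
  have a_inf: "(range B = {(\<Sum>i\<in>?I. v i) | v. \<forall>i\<in>?I. v i \<in> range B \<inter> Xs i})
       \<longleftrightarrow> decomp_inf ?I Xs A B g \<alpha>"
  proof
    assume RB: "range B = {(\<Sum>i\<in>?I. v i) | v. \<forall>i\<in>?I. v i \<in> range B \<inter> Xs i}"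
    have al: "\<alpha> \<ge> 0" using alpha by simp
    show "decomp_inf ?I Xs A B g \<alpha>"
      by (rule fwd_inf[OF dec mod hA inv hBl g_sep g_nonneg al]) (use RB att_inf_sub in auto)
  next
    assume D: "decomp_inf ?I Xs A B g \<alpha>"
    have "range B \<subseteq> {(\<Sum>i\<in>?I. v i) | v. \<forall>i\<in>?I. v i \<in> range B \<inter> Xs i}"
    proof
      fix y assume "y \<in> range B"
      then obtain u where y: "y = B u" by blast
      show "y \<in> {(\<Sum>i\<in>?I. v i) | v. \<forall>i\<in>?I. v i \<in> range B \<inter> Xs i}"
        unfolding y
        by (rule rev_inf[OF dec hA hBl sA g_nonneg g_zero alpha(1) D]) (use att_inf_sub in auto)
    qed
    then show "range B = {(\<Sum>i\<in>?I. v i) | v. \<forall>i\<in>?I. v i \<in> range B \<inter> Xs i}"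
      using sub by blast
  qed
  show ?thesis using a_fin a_inf by blast
qed

end
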